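(* Let $G=\mathbb{Z}_2\times\mathbb{Z}_2$, $\mathcal{L}=\{0,1,2\}$, and $L:G\to\mathcal{L}$ defined by $L((0,0))=0$, $L((0,1))=1$, $L((1,0))=L((1,1))=2$. Then $L$ is friendly.
   Context: For $m\ge3$ let $Z_m=\{(g_1,\dots,g_m)\in G^m: g_1+\cdots+g_{m-1}=g_m\}$, let $\widetilde{L}:Z_m\to\mathcal{L}^m$ be $\widetilde L(g_1,\dots,g_m)=(L(g_1),\dots,L(g_m))$, and let $\pi_i:G^m\to G$ be the $i$-th coordinate projection. $L$ is called $m$-friendly if for every $l=(l_1,\dots,l_m)\in\widetilde{L}(Z_m)$ and every $i=1,\dots,m$ one has $\pi_i(\widetilde{L}^{-1}(l))=L^{-1}(l_i)$. $L$ is friendly if it is $m$-friendly for all $m\ge3$. *)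

theory Defs
  imports Main "HOL-Library.Z2" "HOL-Library.Product_Plus"
begin

definition Zm :: "nat \<Rightarrow> ('g::ab_group_add) list set" where
  "Zm m = {gs. length gs = m \<and> sum_list (butlast gs) = last gs}"

definition Ltilde :: "('g \<Rightarrow> 'l) \<Rightarrow> 'g list \<Rightarrow> 'l list" where
  "Ltilde L gs = map L gs"

text \<open>m-friendly (coordinates indexed 0..m-1 instead of 1..m).\<close>
definition m_friendly :: "nat \<Rightarrow> (('g::ab_group_add) \<Rightarrow> 'l) \<Rightarrow> bool" where
  "m_friendly m L \<longleftrightarrow>
     (\<forall>l \<in> Ltilde L ` Zm m. \<forall>i < m.
        (\<lambda>gs. gs ! i) ` ({gs \<in> Zm m. Ltilde L gs = l}) = L -` {l ! i})"

definition friendly :: "(('g::ab_group_add) \<Rightarrow> 'l) \<Rightarrow> bool" where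
  "friendly L \<longleftrightarrow> (\<forall>m\<ge>3. m_friendly m L)"

definition Lex :: "bit \<times> bit \<Rightarrow> nat" where
  "Lex g = (if g = (0,0) then 0 else if g = (0,1) then 1 else 2)"

end

theory Submission
  imports Defs
begin

lemma bit_cases2: "(b::bit) = 0 \<or> b = 1"
  using bit_not_zero_iff by blast

lemma bit_neg: "- (b::bit) = b"
  using bit_cases2[of b] by auto

lemma pair_neg: "- (g::bit\<times>bit) = g"
  by (cases g) (simp add: bit_neg)

lemma Zm_iff:
  fixes gs :: "(bit\<times>bit) list"
  assumes "m \<ge> 1"
  shows "gs \<in> Zm m \<longleftrightarrow> length gs = m \<and> sum_list gs = 0"
proof (cases "gs = []")
  case True then show ?thesis using assms by (auto simp: Zm_def)
next
  case False
  have e: "sum_list gs = sum_list (butlast gs) + last gs"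
  proof -
    have "sum_list gs = sum_list (butlast gs @ [last gs])"
      using False by (simp add: append_butlast_last_id)
    also have "\<dots> = sum_list (butlast gs) + last gs" by simp
    finally show ?thesis .
  qed
  have ab: "(a::bit\<times>bit) + b = 0 \<longleftrightarrow> a = b" for a b
  proof
    assume "a + b = 0" then have "a = - b" by (simp add: eq_neg_iff_add_eq_0)
    then show "a = b" by (simp add: pair_neg)
  next
    assume "a = b" then have "a = - b" by (simp add: pair_neg)
    then show "a + b = 0" by simp
  qed
  show ?thesis unfolding Zm_def mem_Collect_eq e ab by (rule refl)
qed

lemma sum_list_update:
  fixes xs :: "'a::ab_group_add list"
  shows "i < length xs \<Longrightarrow> sum_list (xs[i := v]) = sum_list xs - xs!i + v"
  by (induction xs arbitrary: i) (auto split: nat.splits simp: algebra_simps)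

lemma Lex2: "Lex g = 2 \<longleftrightarrow> fst g = 1"
  using bit_cases2[of "fst g"] bit_cases2[of "snd g"]
  by (cases g) (auto simp: Lex_def)

lemma Lex_eq: "Lex g = Lex h \<Longrightarrow> g \<noteq> h \<Longrightarrow> h = g + (0,1) \<and> Lex g = 2"
  using bit_cases2[of "fst g"] bit_cases2[of "snd g"] bit_cases2[of "fst h"] bit_cases2[of "snd h"]
  by (cases g; cases h) (auto simp: Lex_def)

lemma Lex_shift: "fst g = 1 \<Longrightarrow> Lex (g + (0,1)) = Lex g"
  by (cases g) (auto simp: Lex_def)

lemma other_two:
  fixes gs :: "(bit\<times>bit) list"
  assumes "sum_list gs = 0" "i < length gs" "fst (gs!i) = 1"
  shows "\<exists>j < length gs. j \<noteq> i \<and> fst (gs!j) = 1"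
proof (rule ccontr)
  assume H: "\<not> ?thesis"
  have "fst (sum_list gs) = (\<Sum>k<length gs. fst (gs!k))"
    by (simp add: sum_list_sum_nth fst_sum atLeast0LessThan)
  also have "\<dots> = fst (gs!i) + (\<Sum>k\<in>{..<length gs}-{i}. fst (gs!k))"
    using assms(2) by (simp add: sum.remove)
  also have "(\<Sum>k\<in>{..<length gs}-{i}. fst (gs!k)) = 0"
    using H bit_cases2 by (intro sum.neutral) blast
  finally show False using assms by simp
qed

theorem mainTheorem4:
  shows "friendly Lex"
  unfolding friendly_def m_friendly_def
proof (intro allI impI ballI)
  fix m :: nat and l i
  assume m: "3 \<le> m" and l: "l \<in> Ltilde Lex ` Zm m" and i: "i < m"
  from l obtain gs0 where g0: "gs0 \<in> Zm m" and l0: "l = map Lex gs0"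
    by (auto simp: Ltilde_def)
  have len: "length gs0 = m" and s0: "sum_list gs0 = 0" using g0 m Zm_iff by auto
  show "(\<lambda>gs. gs ! i) ` {gs \<in> Zm m. Ltilde Lex gs = l} = Lex -` {l ! i}"
  proof
    show "(\<lambda>gs. gs ! i) ` {gs \<in> Zm m. Ltilde Lex gs = l} \<subseteq> Lex -` {l ! i}"
    proof
      fix x assume "x \<in> (\<lambda>gs. gs ! i) ` {gs \<in> Zm m. Ltilde Lex gs = l}"
      then obtain gs where "gs \<in> Zm m" "map Lex gs = l" "x = gs!i"
        by (auto simp: Ltilde_def)
      moreover then have "i < length gs" using i by (simp add: Zm_def)
      ultimately have "l ! i = Lex x" by (metis nth_map)
      then show "x \<in> Lex -` {l ! i}" by simp
    qed
  next
    show "Lex -` {l ! i} \<subseteq> (\<lambda>gs. gs ! i) ` {gs \<in> Zm m. Ltilde Lex gs = l}"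
    proof
      fix g assume "g \<in> Lex -` {l ! i}"
      then have gl: "Lex g = Lex (gs0!i)" using l0 len i by simp
      show "g \<in> (\<lambda>gs. gs ! i) ` {gs \<in> Zm m. Ltilde Lex gs = l}"
      proof (cases "g = gs0!i")
        case True
        then show ?thesis using g0 l0
          by (intro rev_image_eqI[of gs0]) (simp_all add: Ltilde_def)
      next
        case False
        from Lex_eq[OF gl[symmetric] False[symmetric]]
        have gg: "g = gs0!i + (0,1)" and L2: "Lex (gs0!i) = 2" by auto
        from L2 have "fst (gs0!i) = 1" by (simp add: Lex2)
        then obtain j where j: "j < m" "j \<noteq> i" "fst (gs0!j) = 1"
          using other_two[OF s0] i len by blast
        define gs where "gs = gs0[i := gs0!i + (0,1), j := gs0!j + (0,1)]"
        have lg: "length gs = m" using len by (simp add: gs_def)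
        have "sum_list gs = sum_list gs0 + ((0,1) + (0,1))"
          using i j len by (simp add: gs_def sum_list_update nth_list_update algebra_simps)
        also have "(0::bit,1::bit) + (0,1) = 0" by (simp add: zero_prod_def)
        finally have sg: "sum_list gs = 0" using s0 by simp
        have "map Lex gs = l"
          unfolding l0 gs_def using i j len
          using \<open>fst (gs0!i) = 1\<close>
          by (auto simp: list_eq_iff_nth_eq nth_list_update Lex_shift)
        moreover have "gs!i = g" using i j len gg by (simp add: gs_def)
        moreover have "gs \<in> Zm m" using lg sg m Zm_iff[of m gs] by simp
        ultimately show ?thesis
          by (intro rev_image_eqI[of gs]) (simp_all add: Ltilde_def)
      qed
    qed
  qed
qed

end
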